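(* Let $\lambda$ be a partition of length $r$, $\mu\subset\lambda$ a partition with at most $r$ parts, and $f=(f_1,\dots,f_r)\in\mathbb{Z}_{\ge0}^r$, and assume $\lambda_i-i-f_i\ge\lambda_j-j-f_j$ for all $1\le i<j\le r$. Then \[ \widetilde s_{\lambda/\mu,f}(z|\mathbf b)=\det\left(e^{[f_i|\lambda_i-\mu_j+j-i-f_i-1]}_{\lambda_i-\mu_j+j-i}(z|\tau^{j-\mu_j-1}\mathbf b)\right)_{1\le i,j\le r}. \]
   Context: $\mathbf b=(b_i)_{i\in\mathbb{Z}}$ are independent variables, $z=(z_i)_{i\ge1}$; $\tau^k\mathbf b=(b_{1+k},b_{2+k},\dots)$. For a sequence $y$ and $k\in\mathbb{Z}$, $e^{[k]}_u(y)=\prod_{i=1}^k(1+y_iu)$ ($k\ge0$), $\prod_{i=1}^{|k|}(1-y_iu)^{-1}$ ($k\le0$); $e^{[k|\ell]}_m(z|y)=[u^m]e^{[k]}_u(z)e^{[\ell]}_u(y)$, which is $0$ for $m<0$. A row-strict tableau of $(\lambda/\mu,f)$ fills each box $(i,j)$ with $\mu_i<j\le\lambda_i$ by a positive integer, strictly increasing from left to right along rows, weakly increasing from top to bottom along columns, with all entries of row $i$ at most $f_i$. $\widetilde s_{\lambda/\mu,f}(z|\mathbf b)=\sum_T\prod_{\text{entry }e\text{ in box }(i,j)}(z_e+b_{e+i-j})$, summed over all row-strict tableaux of $(\lambda/\mu,f)$. *)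

theory Defs
  imports "Jordan_Normal_Form.Determinant" "HOL-Computational_Algebra.Formal_Power_Series"
begin

text \<open>Sequences y are functions on nat, only indices y 1, y 2, ... are used.
  For k \<le> 0 the factor (1 - y_i u)^{-1} is the geometric series sum_n y_i^n u^n.\<close>

definition geom_fps :: "'a::comm_ring_1 \<Rightarrow> 'a fps" where
  "geom_fps c = Abs_fps (\<lambda>n. c ^ n)"

definition e_gen :: "(nat \<Rightarrow> 'a::comm_ring_1) \<Rightarrow> int \<Rightarrow> 'a fps" where
  "e_gen y k = (if k \<ge> 0 then (\<Prod>i\<in>{1..nat k}. 1 + fps_const (y i) * fps_X)
                else (\<Prod>i\<in>{1..nat (- k)}. geom_fps (y i)))"

definition e_kl :: "int \<Rightarrow> int \<Rightarrow> int \<Rightarrow> (nat \<Rightarrow> 'a::comm_ring_1) \<Rightarrow> (nat \<Rightarrow> 'a) \<Rightarrow> 'a" where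
  "e_kl k l m z y = (if m < 0 then 0 else fps_nth (e_gen z k * e_gen y l) (nat m))"

definition tau :: "int \<Rightarrow> (int \<Rightarrow> 'a) \<Rightarrow> nat \<Rightarrow> 'a" where
  "tau k b = (\<lambda>i. b (int i + k))"

text \<open>Partitions as functions nat => nat, parts indexed from 1.\<close>
definition is_partition_len :: "(nat \<Rightarrow> nat) \<Rightarrow> nat \<Rightarrow> bool" where
  "is_partition_len lam r \<longleftrightarrow> (\<forall>i\<ge>1. lam (Suc i) \<le> lam i) \<and>
     (\<forall>i. 1 \<le> i \<and> i \<le> r \<longrightarrow> lam i > 0) \<and> (\<forall>i>r. lam i = 0)"

definition is_partition_atmost :: "(nat \<Rightarrow> nat) \<Rightarrow> nat \<Rightarrow> bool" where
  "is_partition_atmost mu r \<longleftrightarrow> (\<forall>i\<ge>1. mu (Suc i) \<le> mu i) \<and> (\<forall>i>r. mu i = 0)"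

definition skew_boxes :: "(nat \<Rightarrow> nat) \<Rightarrow> (nat \<Rightarrow> nat) \<Rightarrow> (nat \<times> nat) set" where
  "skew_boxes lam mu = {(i, j). 1 \<le> i \<and> mu i < j \<and> j \<le> lam i}"

definition row_strict_tableaux ::
  "(nat \<Rightarrow> nat) \<Rightarrow> (nat \<Rightarrow> nat) \<Rightarrow> (nat \<Rightarrow> nat) \<Rightarrow> (nat \<times> nat \<Rightarrow> nat) set" where
  "row_strict_tableaux lam mu f = {T.
     (\<forall>p. p \<notin> skew_boxes lam mu \<longrightarrow> T p = 0) \<and>
     (\<forall>(i, j)\<in>skew_boxes lam mu. 1 \<le> T (i, j) \<and> T (i, j) \<le> f i) \<and>
     (\<forall>i j. (i, j) \<in> skew_boxes lam mu \<and> (i, Suc j) \<in> skew_boxes lam mu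
            \<longrightarrow> T (i, j) < T (i, Suc j)) \<and>
     (\<forall>i j. (i, j) \<in> skew_boxes lam mu \<and> (Suc i, j) \<in> skew_boxes lam mu
            \<longrightarrow> T (i, j) \<le> T (Suc i, j))}"

definition s_tilde ::
  "(nat \<Rightarrow> nat) \<Rightarrow> (nat \<Rightarrow> nat) \<Rightarrow> (nat \<Rightarrow> nat) \<Rightarrow> (nat \<Rightarrow> 'a::comm_ring_1) \<Rightarrow> (int \<Rightarrow> 'a) \<Rightarrow> 'a" where
  "s_tilde lam mu f z b = (\<Sum>T\<in>row_strict_tableaux lam mu f.
      \<Prod>(i, j)\<in>skew_boxes lam mu. z (T (i, j)) + b (int (T (i, j)) + int i - int j))"

end

theory Submission
  imports Defs
begin


definition G :: "(nat \<Rightarrow> 'a::comm_ring_1) \<Rightarrow> (int \<Rightarrow> 'a) \<Rightarrow> nat \<Rightarrow> int \<Rightarrow> int \<Rightarrow> 'a" where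
  "G z b f a c = e_kl (int f) (a - c - int f - 1) (a - c) z (tau (-c-1) b)"

lemma lin_prod_deg:
  "\<forall>m>n. fps_nth (\<Prod>i\<in>{1..n}. 1 + fps_const (y i) * fps_X :: 'a::comm_ring_1 fps) m = 0"
proof (induction n)
  case 0 then show ?case by simp
next
  case (Suc n)
  show ?case
  proof (intro allI impI)
    fix m assume m: "m > Suc n"
    have "(\<Prod>i\<in>{1..Suc n}. 1 + fps_const (y i) * fps_X :: 'a fps) =
      (\<Prod>i\<in>{1..n}. 1 + fps_const (y i) * fps_X) * (1 + fps_const (y (Suc n)) * fps_X)"
      by simp
    also have "\<dots> = (\<Prod>i\<in>{1..n}. 1 + fps_const (y i) * fps_X) + fps_const (y (Suc n)) * (fps_X * (\<Prod>i\<in>{1..n}. 1 + fps_const (y i) * fps_X))"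
      by (simp add: algebra_simps)
    finally show "fps_nth (\<Prod>i\<in>{1..Suc n}. 1 + fps_const (y i) * fps_X :: 'a fps) m = 0"
      using Suc.IH m by simp
  qed
qed

lemma e_gen_deg: "k \<ge> 0 \<Longrightarrow> int m > k \<Longrightarrow> fps_nth (e_gen y k) m = 0"
  using lin_prod_deg[of "nat k" y] by (simp add: e_gen_def)

lemma mult_deg: assumes "\<forall>m>d1. fps_nth (F::'a::comm_ring_1 fps) m = 0" "\<forall>m>d2. fps_nth H m = 0" "m > d1 + d2"
  shows "fps_nth (F * H) m = 0"
  unfolding fps_mult_nth
proof (rule sum.neutral, intro ballI)
  fix i assume "i \<in> {0..m}"
  then show "fps_nth F i * fps_nth H (m - i) = 0" using assms
    by (cases "i > d1") auto
qed

lemma e_gen_neg: "k \<le> 0 \<Longrightarrow> e_gen y k = (\<Prod>i\<in>{1..nat (-k)}. geom_fps (y i))"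
  by (cases "k = 0") (auto simp: e_gen_def)

lemma geom_inv: "geom_fps (c::'a::comm_ring_1) * (1 - fps_const c * fps_X) = 1"
proof -
  have "geom_fps c * (1 - fps_const c * fps_X) = geom_fps c - fps_const c * (fps_X * geom_fps c)"
    by (simp add: algebra_simps)
  also have "\<dots> = 1"
  proof (rule fps_ext)
    fix n
    show "fps_nth (geom_fps c - fps_const c * (fps_X * geom_fps c)) n = fps_nth 1 n"
      by (cases n) (simp_all add: geom_fps_def)
  qed
  finally show ?thesis .
qed

lemma G_neg: "a < c \<Longrightarrow> G z b f a c = 0"
  by (simp add: G_def e_kl_def)

lemma G_zero: "G z b 0 a c = (if a = c then 1 else 0)"
proof -
  consider "a < c" | "a = c" | "a > c" by linarith
  then show ?thesis
  proof cases
    case 1 then show ?thesis by (simp add: G_neg)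
  next
    case 2 then show ?thesis by (simp add: G_def e_kl_def e_gen_def geom_fps_def)
  next
    case 3
    have "fps_nth (e_gen z 0 * e_gen (tau (-c-1) b) (a - c - 1)) (nat (a - c)) = 0"
    proof (rule mult_deg[of 0 _ "nat (a - c - 1)"])
      show "\<forall>m>0. fps_nth (e_gen z 0) m = 0" by (simp add: e_gen_def)
      show "\<forall>m>nat (a - c - 1). fps_nth (e_gen (tau (-c-1) b) (a - c - 1)) m = 0"
        using 3 by (auto intro!: e_gen_deg)
    qed (use 3 in auto)
    then show ?thesis using 3 by (simp add: G_def e_kl_def)
  qed
qed

lemma e_gen_Suc: "e_gen z (int (Suc f)) = e_gen z (int f) * (1 + fps_const (z (Suc f)) * fps_X)"
proof -
  have "nat (int (Suc f)) = Suc f" by simp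
  then show ?thesis unfolding e_gen_def by (simp del: of_nat_Suc)
qed

lemma G_rec: "G z b (Suc f) a c = G z b f a c + (z (Suc f) + b (int (Suc f) - a)) * G z b f (a - 1) c"
proof -
  define y where "y = tau (-c-1) b"
  consider "a - c < 0" | "a - c > int (Suc f)" | "0 \<le> a - c \<and> a - c \<le> int (Suc f)" by linarith
  then show ?thesis
  proof cases
    case 1 then show ?thesis by (simp add: G_neg)
  next
    case 2
    have A: "fps_nth (e_gen z (int (Suc f)) * e_gen y (a - c - int (Suc f) - 1)) (nat (a - c)) = 0"
    proof (rule mult_deg[of "Suc f" _ "nat (a - c - int (Suc f) - 1)"])
      show "\<forall>m>Suc f. fps_nth (e_gen z (int (Suc f))) m = 0" by (auto intro!: e_gen_deg)
      show "\<forall>m>nat (a - c - int (Suc f) - 1). fps_nth (e_gen y (a - c - int (Suc f) - 1)) m = 0"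
        using 2 by (auto intro!: e_gen_deg)
    qed (use 2 in auto)
    have B: "fps_nth (e_gen z (int f) * e_gen y (a - c - int f - 1)) (nat (a - c)) = 0"
    proof (rule mult_deg[of "f" _ "nat (a - c - int f - 1)"])
      show "\<forall>m>f. fps_nth (e_gen z (int f)) m = 0" by (auto intro!: e_gen_deg)
      show "\<forall>m>nat (a - c - int f - 1). fps_nth (e_gen y (a - c - int f - 1)) m = 0"
        using 2 by (auto intro!: e_gen_deg)
    qed (use 2 in auto)
    have C: "fps_nth (e_gen z (int f) * e_gen y (a - 1 - c - int f - 1)) (nat (a - 1 - c)) = 0"
    proof (rule mult_deg[of "f" _ "nat (a - 1 - c - int f - 1)"])
      show "\<forall>m>f. fps_nth (e_gen z (int f)) m = 0" by (auto intro!: e_gen_deg)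
      show "\<forall>m>nat (a - 1 - c - int f - 1). fps_nth (e_gen y (a - 1 - c - int f - 1)) m = 0"
        using 2 by (auto intro!: e_gen_deg)
    qed (use 2 in auto)
    show ?thesis using A B C 2 by (simp add: G_def e_kl_def y_def)
  next
    case 3
    define m where "m = nat (int f + 2 - (a - c))"
    have m1: "m \<ge> 1" using 3 unfolding m_def by linarith
    have E: "e_gen y (a - c - int (Suc f) - 1) = (\<Prod>i\<in>{1..m}. geom_fps (y i))"
      using 3 by (subst e_gen_neg) (auto simp: m_def intro!: prod.cong)
    have E': "e_gen y (a - c - int f - 1) = (\<Prod>i\<in>{1..m-1}. geom_fps (y i))"
      using 3 by (subst e_gen_neg) (auto simp: m_def intro!: prod.cong)
    have E'': "e_gen y (a - 1 - c - int f - 1) = e_gen y (a - c - int (Suc f) - 1)"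
      by (simp add: algebra_simps)
    have Em: "e_gen y (a - c - int (Suc f) - 1) = e_gen y (a - c - int f - 1) * geom_fps (y m)"
    proof -
      obtain k where k: "m = Suc k" using m1 by (cases m) auto
      show ?thesis unfolding E E' k by simp
    qed
    have ym: "y m = b (int (Suc f) - a)"
    proof -
      have "int m + (- c - 1) = int (Suc f) - a" using 3 unfolding m_def by linarith
      then show ?thesis unfolding y_def tau_def by (metis of_nat_Suc)
    qed
    define P where "P = e_gen z (int f)"
    define Q where "Q = P * e_gen y (a - c - int (Suc f) - 1)"
    have Z: "e_gen z (int (Suc f)) * e_gen y (a - c - int (Suc f) - 1) = Q + fps_const (z (Suc f)) * (fps_X * Q)"
      unfolding Q_def P_def e_gen_Suc by (simp add: algebra_simps)
    have W: "P * e_gen y (a - c - int f - 1) = Q - fps_const (y m) * (fps_X * Q)"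
    proof -
      have "P * e_gen y (a - c - int f - 1) = P * e_gen y (a - c - int f - 1) * (geom_fps (y m) * (1 - fps_const (y m) * fps_X))"
        by (simp add: geom_inv)
      also have "\<dots> = Q * (1 - fps_const (y m) * fps_X)"
        unfolding Q_def Em by (simp add: algebra_simps)
      finally show ?thesis by (simp add: algebra_simps)
    qed
    show ?thesis
    proof (cases "a - c = 0")
      case True
      then show ?thesis using Z W
        by (simp add: G_def e_kl_def y_def[symmetric] P_def[symmetric] E'' Q_def[symmetric])
    next
      case False
      then have n: "nat (a - c) = Suc (nat (a - 1 - c))" using 3 by (intro nat_eq_iff[THEN iffD2]) auto
      have g1: "G z b (Suc f) a c = fps_nth Q (Suc (nat (a - 1 - c))) + z (Suc f) * fps_nth Q (nat (a - 1 - c))"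
        using 3 unfolding G_def e_kl_def y_def[symmetric] by (simp only: n Z) simp
      have g2: "G z b f a c = fps_nth Q (Suc (nat (a - 1 - c))) - y m * fps_nth Q (nat (a - 1 - c))"
        using 3 unfolding G_def e_kl_def y_def[symmetric] P_def[symmetric] by (simp only: n W) simp
      have g3: "G z b f (a - 1) c = fps_nth Q (nat (a - 1 - c))"
        using 3 False unfolding G_def e_kl_def y_def[symmetric] P_def[symmetric] Q_def E''[symmetric] by simp
      show ?thesis unfolding g1 g2 g3 ym by (simp add: algebra_simps)
    qed
  qed
qed



lemma boxes_fin: assumes "\<forall>i>r. lam i = 0" shows "finite (skew_boxes lam mu)"
proof -
  have "skew_boxes lam mu \<subseteq> {1..r} \<times> {..lam 0 + (\<Sum>i\<in>{1..r}. lam i)}"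
  proof
    fix p assume "p \<in> skew_boxes lam mu"
    then obtain i j where p: "p = (i,j)" "1 \<le> i" "mu i < j" "j \<le> lam i" by (auto simp: skew_boxes_def)
    have "i \<le> r" using assms p by (metis leI less_nat_zero_code order_less_le_trans)
    then have "lam i \<le> (\<Sum>i\<in>{1..r}. lam i)" using p by (intro member_le_sum) auto
    then show "p \<in> {1..r} \<times> {..lam 0 + (\<Sum>i\<in>{1..r}. lam i)}" using p \<open>i \<le> r\<close> by auto
  qed
  then show ?thesis by (rule finite_subset) auto
qed

lemma tab_fin: assumes "\<forall>i>r. lam i = 0" shows "finite (row_strict_tableaux lam mu f)"
proof -
  let ?B = "skew_boxes lam mu"
  let ?g = "\<lambda>h p. if p \<in> ?B then h p else (0::nat)"
  have "row_strict_tableaux lam mu f \<subseteq> ?g ` (PiE ?B (\<lambda>p. {0..f (fst p)}))"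
  proof
    fix T assume T: "T \<in> row_strict_tableaux lam mu f"
    have "T = ?g (restrict T ?B)" using T by (auto simp: row_strict_tableaux_def restrict_def)
    moreover have "restrict T ?B \<in> PiE ?B (\<lambda>p. {0..f (fst p)})" using T
      by (auto simp: row_strict_tableaux_def)
    ultimately show "T \<in> ?g ` (PiE ?B (\<lambda>p. {0..f (fst p)}))" by blast
  qed
  moreover have "finite (PiE ?B (\<lambda>p. {0..f (fst p)}))"
    using boxes_fin[OF assms] by (intro finite_PiE) auto
  ultimately show ?thesis by (meson finite_imageI finite_subset)
qed

lemma row_chain:
  assumes T: "T \<in> row_strict_tableaux lam mu f"
    and "(i,j) \<in> skew_boxes lam mu"
  shows "(i, j + Suc d) \<in> skew_boxes lam mu \<Longrightarrow> T (i,j) < T (i, j + Suc d)"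
proof (induction d)
  case 0
  then show ?case using T assms(2) by (auto simp: row_strict_tableaux_def)
next
  case (Suc d)
  have "(i, j + Suc d) \<in> skew_boxes lam mu" using Suc.prems assms(2) by (auto simp: skew_boxes_def)
  then have "T (i,j) < T (i, j + Suc d)" using Suc.IH by blast
  moreover have "T (i, j + Suc d) < T (i, Suc (j + Suc d))"
  proof -
    have "\<forall>i j. (i, j) \<in> skew_boxes lam mu \<and> (i, Suc j) \<in> skew_boxes lam mu \<longrightarrow> T (i, j) < T (i, Suc j)"
      using T unfolding row_strict_tableaux_def by blast
    then show ?thesis using Suc.prems \<open>(i, j + Suc d) \<in> skew_boxes lam mu\<close> by simp
  qed
  ultimately show ?case by simp
qed

lemma row_le_last:
  assumes T: "T \<in> row_strict_tableaux lam mu f" and p: "(i,j) \<in> skew_boxes lam mu"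
  shows "T (i,j) \<le> T (i, lam i)" "(i, lam i) \<in> skew_boxes lam mu"
proof -
  show L: "(i, lam i) \<in> skew_boxes lam mu" using p by (auto simp: skew_boxes_def)
  show "T (i,j) \<le> T (i, lam i)"
  proof (cases "j = lam i")
    case False
    then have "j < lam i" using p by (auto simp: skew_boxes_def)
    then obtain d where "lam i = j + Suc d" using less_imp_Suc_add by fastforce
    then show ?thesis using row_chain[OF T p, of d] L by simp
  qed simp
qed

lemma tab_rebound:
  assumes T: "T \<in> row_strict_tableaux lam mu f"
    and bd: "\<And>k j. (k,j) \<in> skew_boxes lam mu \<Longrightarrow> T (k,j) \<le> g k"
  shows "T \<in> row_strict_tableaux lam mu g"
proof -
  have "\<forall>(i, j)\<in>skew_boxes lam mu. 1 \<le> T (i, j) \<and> T (i, j) \<le> g i"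
  proof (intro ballI, clarify)
    fix i j assume "(i,j) \<in> skew_boxes lam mu"
    then have "1 \<le> T (i, j)" using T unfolding row_strict_tableaux_def by blast
    then show "1 \<le> T (i, j) \<and> T (i, j) \<le> g i" using bd \<open>(i,j) \<in> skew_boxes lam mu\<close> by blast
  qed
  then show ?thesis using T unfolding row_strict_tableaux_def by blast
qed

lemma tab_bound: "T \<in> row_strict_tableaux lam mu f \<Longrightarrow> (k,j) \<in> skew_boxes lam mu \<Longrightarrow> 1 \<le> T (k,j) \<and> T (k,j) \<le> f k"
  unfolding row_strict_tableaux_def by blast

lemma tab_mono:
  assumes "\<forall>k. f' k \<le> f k" shows "row_strict_tableaux lam mu f' \<subseteq> row_strict_tableaux lam mu f"
  using tab_rebound tab_bound assms le_trans by blast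

lemma tab_eq:
  assumes fi: "f i = Suc N"
    and H: "\<forall>T\<in>row_strict_tableaux lam mu f. (i, lam i) \<in> skew_boxes lam mu \<longrightarrow> T (i, lam i) \<noteq> Suc N"
  shows "row_strict_tableaux lam mu f = row_strict_tableaux lam mu (f(i := N))"
proof
  show "row_strict_tableaux lam mu (f(i := N)) \<subseteq> row_strict_tableaux lam mu f"
    by (rule tab_mono) (simp add: fi)
  show "row_strict_tableaux lam mu f \<subseteq> row_strict_tableaux lam mu (f(i := N))"
  proof
    fix T assume T: "T \<in> row_strict_tableaux lam mu f"
    show "T \<in> row_strict_tableaux lam mu (f(i := N))"
    proof (rule tab_rebound[OF T])
      fix k j assume kj: "(k,j) \<in> skew_boxes lam mu"
      show "T (k, j) \<le> (f(i := N)) k"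
      proof (cases "k = i")
        case True
        have L: "(i, lam i) \<in> skew_boxes lam mu" using row_le_last(2)[OF T, of i j] kj True by simp
        have "T (i, lam i) \<le> Suc N" using tab_bound[OF T L] fi by simp
        moreover have "T (i, lam i) \<noteq> Suc N" using H T L by blast
        ultimately show ?thesis using row_le_last(1)[OF T, of i j] kj True by simp
      next
        case False then show ?thesis using tab_bound[OF T kj] by simp
      qed
    qed
  qed
qed

lemma tab_I:
  assumes "\<And>p. p \<notin> skew_boxes lam mu \<Longrightarrow> T p = 0"
    and "\<And>i j. (i,j) \<in> skew_boxes lam mu \<Longrightarrow> 1 \<le> T (i,j) \<and> T (i,j) \<le> f i"
    and "\<And>i j. (i,j) \<in> skew_boxes lam mu \<Longrightarrow> (i, Suc j) \<in> skew_boxes lam mu \<Longrightarrow> T (i,j) < T (i, Suc j)"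
    and "\<And>i j. (i,j) \<in> skew_boxes lam mu \<Longrightarrow> (Suc i, j) \<in> skew_boxes lam mu \<Longrightarrow> T (i,j) \<le> T (Suc i, j)"
  shows "T \<in> row_strict_tableaux lam mu f"
  unfolding row_strict_tableaux_def using assms by blast

lemma tab_zero: "T \<in> row_strict_tableaux lam mu f \<Longrightarrow> p \<notin> skew_boxes lam mu \<Longrightarrow> T p = 0"
  unfolding row_strict_tableaux_def by blast
lemma tab_row: "T \<in> row_strict_tableaux lam mu f \<Longrightarrow> (i,j) \<in> skew_boxes lam mu \<Longrightarrow> (i, Suc j) \<in> skew_boxes lam mu \<Longrightarrow> T (i,j) < T (i, Suc j)"
  unfolding row_strict_tableaux_def by blast
lemma tab_col: "T \<in> row_strict_tableaux lam mu f \<Longrightarrow> (i,j) \<in> skew_boxes lam mu \<Longrightarrow> (Suc i, j) \<in> skew_boxes lam mu \<Longrightarrow> T (i,j) \<le> T (Suc i, j)"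
  unfolding row_strict_tableaux_def by blast

definition wt :: "(nat \<Rightarrow> nat) \<Rightarrow> (nat \<Rightarrow> nat) \<Rightarrow> (nat \<Rightarrow> 'a::comm_ring_1) \<Rightarrow> (int \<Rightarrow> 'a) \<Rightarrow> (nat \<times> nat \<Rightarrow> nat) \<Rightarrow> 'a" where
  "wt lam mu z b T = (\<Prod>(i, j)\<in>skew_boxes lam mu. z (T (i, j)) + b (int (T (i, j)) + int i - int j))"

lemma s_tilde_wt: "s_tilde lam mu f z b = (\<Sum>T\<in>row_strict_tableaux lam mu f. wt lam mu z b T)"
  by (simp add: s_tilde_def wt_def)

lemma boxes_red:
  assumes "mu i < lam i"
  shows "skew_boxes (lam(i := lam i - 1)) mu = skew_boxes lam mu - {(i, lam i)}"
  using assms by (auto simp: skew_boxes_def split: if_splits)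

lemma boxes_last: "mu i < lam i \<Longrightarrow> 1 \<le> i \<Longrightarrow> (i, lam i) \<in> skew_boxes lam mu"
  by (auto simp: skew_boxes_def)

lemma split_valid:
  assumes i1: "1 \<le> i" and fi: "f i = Suc N" and mi: "mu i < lam i" and li: "lam (Suc i) < lam i"
    and fprev: "\<And>k. Suc k = i \<Longrightarrow> 1 \<le> k \<Longrightarrow> f k \<le> Suc N"
    and finB: "finite (skew_boxes lam mu)"
  defines "p \<equiv> (i, lam i)" and "lam' \<equiv> lam(i := lam i - 1)" and "f' \<equiv> f(i := N)"
  shows "row_strict_tableaux lam mu f = row_strict_tableaux lam mu f' \<union> (\<lambda>T. T(p := Suc N)) ` row_strict_tableaux lam' mu f'"
    and "row_strict_tableaux lam mu f' \<inter> (\<lambda>T. T(p := Suc N)) ` row_strict_tableaux lam' mu f' = {}"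
    and "inj_on (\<lambda>T. T(p := Suc N)) (row_strict_tableaux lam' mu f')"
    and "\<And>T. T \<in> row_strict_tableaux lam' mu f' \<Longrightarrow> wt lam mu z b (T(p := Suc N)) =
           (z (Suc N) + b (int (Suc N) + int i - int (lam i))) * wt lam' mu z b T"
proof -
  let ?B = "skew_boxes lam mu" and ?B' = "skew_boxes lam' mu"
  have BB: "?B' = ?B - {p}" unfolding lam'_def p_def by (rule boxes_red[of mu i lam, OF mi])
  have pB: "p \<in> ?B" unfolding p_def using boxes_last[of mu i lam, OF mi i1] .
  have pB': "p \<notin> ?B'" using BB by simp
  have pB2: "(i, lam i) \<in> ?B" using pB by (simp add: p_def)
  have pB2': "(i, lam i) \<notin> ?B'" using pB' by (simp add: p_def)
  have fle: "\<forall>k. f' k \<le> f k" by (simp add: f'_def fi)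
  show "row_strict_tableaux lam mu f = row_strict_tableaux lam mu f' \<union> (\<lambda>T. T(p := Suc N)) ` row_strict_tableaux lam' mu f'"
  proof (intro equalityI subsetI)
    fix T assume T: "T \<in> row_strict_tableaux lam mu f"
    show "T \<in> row_strict_tableaux lam mu f' \<union> (\<lambda>T. T(p := Suc N)) ` row_strict_tableaux lam' mu f'"
    proof (cases "T p = Suc N")
      case False
      have "T \<in> row_strict_tableaux lam mu f'"
      proof (rule tab_rebound[OF T])
        fix k j assume kj: "(k,j) \<in> ?B"
        show "T (k, j) \<le> f' k"
        proof (cases "k = i")
          case True
          have "T p \<le> Suc N" using tab_bound[OF T pB2] fi by (simp add: p_def)
          then show ?thesis using row_le_last(1)[OF T, of i j] kj True False by (simp add: f'_def p_def)
        next
          case False then show ?thesis using tab_bound[OF T kj] by (simp add: f'_def)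
        qed
      qed
      then show ?thesis by blast
    next
      case True
      define T' where "T' = T(p := 0)"
      have "T' \<in> row_strict_tableaux lam' mu f'"
      proof (rule tab_I)
        show "T' q = 0" if "q \<notin> ?B'" for q
          using that tab_zero[OF T, of q] BB by (cases "q = p") (auto simp: T'_def)
        show "1 \<le> T' (k, j) \<and> T' (k, j) \<le> f' k" if kj: "(k, j) \<in> ?B'" for k j
        proof (cases "k = i")
          case True
          have "j \<noteq> lam i" using kj BB True by (auto simp: p_def)
          moreover have "(i,j) \<in> ?B" using kj BB True by auto
          ultimately have "j < lam i" by (simp add: skew_boxes_def)
          then obtain d where d: "lam i = j + Suc d" using less_imp_Suc_add by fastforce
          have "T (i, j) < T p" using row_chain[OF T, of i j d] kj BB pB True d by (simp add: p_def)
          then show ?thesis using tab_bound[OF T, of k j] kj BB True \<open>T p = Suc N\<close> pB'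
            by (auto simp: T'_def f'_def p_def)
        next
          case False then show ?thesis using tab_bound[OF T, of k j] kj BB by (auto simp: T'_def f'_def p_def)
        qed
        show "T' (k, j) < T' (k, Suc j)" if "(k, j) \<in> ?B'" "(k, Suc j) \<in> ?B'" for k j
          using that tab_row[OF T, of k j] BB pB' unfolding T'_def by auto
        show "T' (k, j) \<le> T' (Suc k, j)" if "(k, j) \<in> ?B'" "(Suc k, j) \<in> ?B'" for k j
          using that tab_col[OF T, of k j] BB pB' unfolding T'_def by auto
      qed
      moreover have "T = T'(p := Suc N)" using True unfolding T'_def by (metis fun_upd_triv fun_upd_upd)
      ultimately show ?thesis by blast
    qed
  next
    fix T assume "T \<in> row_strict_tableaux lam mu f' \<union> (\<lambda>T. T(p := Suc N)) ` row_strict_tableaux lam' mu f'"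
    then consider "T \<in> row_strict_tableaux lam mu f'" | T' where "T' \<in> row_strict_tableaux lam' mu f'" "T = T'(p := Suc N)"
      by blast
    then show "T \<in> row_strict_tableaux lam mu f"
    proof cases
      case 1 then show ?thesis using tab_mono[OF fle] by blast
    next
      case 2
      note T' = 2(1)
      show ?thesis
      proof (rule tab_I)
        show "T q = 0" if "q \<notin> ?B" for q
          using that tab_zero[OF T', of q] BB pB 2(2) by auto
        show "1 \<le> T (k, j) \<and> T (k, j) \<le> f k" if kj: "(k, j) \<in> ?B" for k j
        proof (cases "(k,j) = p")
          case True then show ?thesis using 2(2) fi by (auto simp: p_def)
        next
          case False
          then have "(k,j) \<in> ?B'" using kj BB by auto
          then show ?thesis using tab_bound[OF T', of k j] fle 2(2) False le_trans by fastforce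
        qed
        show "T (k, j) < T (k, Suc j)" if kj: "(k, j) \<in> ?B" "(k, Suc j) \<in> ?B" for k j
        proof (cases "(k, Suc j) = p")
          case True
          have "(k,j) \<in> ?B'" using kj BB True by (auto simp: p_def)
          then have "T' (k,j) \<le> N" using tab_bound[OF T', of k j] True by (auto simp: f'_def p_def)
          then show ?thesis using 2(2) True \<open>(k,j) \<in> ?B'\<close> pB' by auto
        next
          case False
          have "(k,j) \<noteq> p" using kj(2) by (auto simp: p_def skew_boxes_def)
          then show ?thesis using tab_row[OF T', of k j] kj BB False 2(2) by auto
        qed
        show "T (k, j) \<le> T (Suc k, j)" if kj: "(k, j) \<in> ?B" "(Suc k, j) \<in> ?B" for k j
        proof (cases "(Suc k, j) = p")
          case True
          have "(k,j) \<in> ?B'" using kj BB True by (auto simp: p_def)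
          then have "T' (k,j) \<le> f k" using tab_bound[OF T', of k j] True by (auto simp: f'_def p_def)
          also have "\<dots> \<le> Suc N" using fprev True kj(1) by (simp add: p_def skew_boxes_def)
          finally show ?thesis using 2(2) True \<open>(k,j) \<in> ?B'\<close> pB' by auto
        next
          case False
          have "(k,j) \<noteq> p" using kj li by (auto simp: p_def skew_boxes_def)
          then show ?thesis using tab_col[OF T', of k j] kj BB False 2(2) by auto
        qed
      qed
    qed
  qed
  show "row_strict_tableaux lam mu f' \<inter> (\<lambda>T. T(p := Suc N)) ` row_strict_tableaux lam' mu f' = {}"
  proof -
    have "T p \<le> N" if "T \<in> row_strict_tableaux lam mu f'" for T
      using tab_bound[OF that, of i "lam i"] pB by (simp add: p_def f'_def)
    then show ?thesis by fastforce
  qed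
  show "inj_on (\<lambda>T. T(p := Suc N)) (row_strict_tableaux lam' mu f')"
  proof (rule inj_onI)
    fix T1 T2 assume T: "T1 \<in> row_strict_tableaux lam' mu f'" "T2 \<in> row_strict_tableaux lam' mu f'"
      and eq: "T1(p := Suc N) = T2(p := Suc N)"
    have "T1 p = 0" "T2 p = 0" using tab_zero[OF T(1) pB2'] tab_zero[OF T(2) pB2'] by (simp_all add: p_def)
    then show "T1 = T2" using eq by (metis fun_upd_triv fun_upd_upd)
  qed
  fix T assume T: "T \<in> row_strict_tableaux lam' mu f'"
  have fin: "finite ?B'" using finB BB by simp
  have "?B = insert p ?B'" using BB pB by auto
  then show "wt lam mu z b (T(p := Suc N)) = (z (Suc N) + b (int (Suc N) + int i - int (lam i))) * wt lam' mu z b T"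
    unfolding wt_def using fin pB'
    apply (simp add: p_def prod.insert)
    apply (rule arg_cong[where f="\<lambda>x. _ * x"])
    apply (rule prod.cong, rule refl)
    using pB2' by auto
qed



lemma det_row_lin:
  assumes A: "A \<in> carrier_mat n n" and B: "B \<in> carrier_mat n n" and C: "C \<in> carrier_mat n n"
    and k: "k < n"
    and oth: "\<And>i j. i < n \<Longrightarrow> j < n \<Longrightarrow> i \<noteq> k \<Longrightarrow> A $$ (i,j) = B $$ (i,j) \<and> C $$ (i,j) = B $$ (i,j)"
    and rk: "\<And>j. j < n \<Longrightarrow> A $$ (k,j) = B $$ (k,j) + w * C $$ (k,j)"
  shows "det A = det B + w * det C"
proof -
  have "signof p * (\<Prod>i = 0..<n. A $$ (i, p i)) =
        signof p * (\<Prod>i = 0..<n. B $$ (i, p i)) + w * (signof p * (\<Prod>i = 0..<n. C $$ (i, p i)))"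
    if p: "p permutes {0..<n}" for p
  proof -
    have pi: "\<And>i. i < n \<Longrightarrow> p i < n" using p permutes_in_image by fastforce
    let ?R = "{0..<n} - {k}"
    have eqB: "(\<Prod>i\<in>?R. A $$ (i, p i)) = (\<Prod>i\<in>?R. B $$ (i, p i))"
      by (rule prod.cong) (use oth pi in auto)
    have eqC: "(\<Prod>i\<in>?R. C $$ (i, p i)) = (\<Prod>i\<in>?R. B $$ (i, p i))"
      by (rule prod.cong) (use oth pi in auto)
    have kk: "k \<in> {0..<n}" using k by simp
    have "(\<Prod>i = 0..<n. A $$ (i, p i)) = A $$ (k, p k) * (\<Prod>i\<in>?R. A $$ (i, p i))"
      by (rule prod.remove[OF _ kk]) simp
    moreover have "(\<Prod>i = 0..<n. B $$ (i, p i)) = B $$ (k, p k) * (\<Prod>i\<in>?R. B $$ (i, p i))"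
      by (rule prod.remove[OF _ kk]) simp
    moreover have "(\<Prod>i = 0..<n. C $$ (i, p i)) = C $$ (k, p k) * (\<Prod>i\<in>?R. C $$ (i, p i))"
      by (rule prod.remove[OF _ kk]) simp
    ultimately show ?thesis using rk[OF pi[OF k]] eqB eqC by (simp add: algebra_simps)
  qed
  then show ?thesis unfolding det_def'[OF A] det_def'[OF B] det_def'[OF C]
    by (simp add: sum.distrib sum_distrib_left)
qed

lemma det_zero_block:
  assumes A: "A \<in> carrier_mat n n" and p: "p < n"
    and z: "\<And>k j. p \<le> k \<Longrightarrow> k < n \<Longrightarrow> j \<le> p \<Longrightarrow> A $$ (k,j) = 0"
  shows "det A = 0"
  unfolding det_def'[OF A]
proof (rule sum.neutral, intro ballI)
  fix s assume "s \<in> {s. s permutes {0..<n}}"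
  then have s: "s permutes {0..<n}" by simp
  have "\<exists>k\<in>{p..<n}. s k \<le> p"
  proof (rule ccontr)
    assume "\<not> ?thesis"
    then have "s ` {p..<n} \<subseteq> {Suc p..<n}"
    proof (intro image_subsetI)
      fix x assume nx: "\<not> (\<exists>k\<in>{p..<n}. s k \<le> p)" and x: "x \<in> {p..<n}"
      have "s x \<in> {0..<n}" using permutes_in_image[OF s] x by simp
      moreover have "\<not> s x \<le> p" using nx x by blast
      ultimately show "s x \<in> {Suc p..<n}" by auto
    qed
    moreover have "inj_on s {p..<n}" using permutes_inj_on[OF s] .
    ultimately have "card {p..<n} \<le> card {Suc p..<n}"
      using card_inj_on_le[of s "{p..<n}" "{Suc p..<n}"] by simp
    then show False using p by simp
  qed
  then obtain k where k: "k \<in> {p..<n}" "s k \<le> p" by blast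
  have "(\<Prod>i = 0..<n. A $$ (i, s i)) = 0"
  proof (rule prod_zero)
    show "\<exists>a\<in>{0..<n}. A $$ (a, s a) = 0"
      using k z[of k "s k"] by (intro bexI[of _ k]) auto
  qed simp
  then show "signof s * (\<Prod>i = 0..<n. A $$ (i, s i)) = 0" by simp
qed

definition Mx :: "(nat \<Rightarrow> 'a::comm_ring_1) \<Rightarrow> (int \<Rightarrow> 'a) \<Rightarrow> nat \<Rightarrow> (nat \<Rightarrow> int) \<Rightarrow> (nat \<Rightarrow> nat) \<Rightarrow> (nat \<Rightarrow> int) \<Rightarrow> 'a mat" where
  "Mx z b r a f c = mat r r (\<lambda>(i,j). G z b (f (Suc i)) (a (Suc i)) (c (Suc j)))"

lemma Mx_carrier: "Mx z b r a f c \<in> carrier_mat r r" by (simp add: Mx_def)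

lemma det_split:
  assumes i: "1 \<le> i" "i \<le> r" and fi: "f i = Suc N"
  shows "det (Mx z b r a f c) = det (Mx z b r a (f(i := N)) c) +
     (z (Suc N) + b (int (Suc N) - a i)) * det (Mx z b r (a(i := a i - 1)) (f(i := N)) c)"
proof (rule det_row_lin[OF Mx_carrier Mx_carrier Mx_carrier, of "i - 1"])
  show "i - 1 < r" using i by simp
  show "Mx z b r a f c $$ (k, j) = Mx z b r a (f(i := N)) c $$ (k, j) \<and>
        Mx z b r (a(i := a i - 1)) (f(i := N)) c $$ (k, j) = Mx z b r a (f(i := N)) c $$ (k, j)"
    if "k < r" "j < r" "k \<noteq> i - 1" for k j
  proof -
    have "Suc k \<noteq> i" using that i by auto
    then show ?thesis using that by (simp add: Mx_def)
  qed
  show "Mx z b r a f c $$ (i - 1, j) = Mx z b r a (f(i := N)) c $$ (i - 1, j) +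
     (z (Suc N) + b (int (Suc N) - a i)) * Mx z b r (a(i := a i - 1)) (f(i := N)) c $$ (i - 1, j)"
    if "j < r" for j
  proof -
    have si: "Suc (i - 1) = i" using i by simp
    show ?thesis using that i unfolding Mx_def by (simp add: si fi G_rec del: of_nat_Suc)
  qed
qed



definition flag :: "nat \<Rightarrow> (nat \<Rightarrow> nat) \<Rightarrow> (nat \<Rightarrow> nat) \<Rightarrow> bool" where
  "flag r lam f \<longleftrightarrow> (\<forall>i j. 1 \<le> i \<and> i < j \<and> j \<le> r \<longrightarrow>
           int (lam i) - int i - int (f i) \<ge> int (lam j) - int j - int (f j))"

definition hyp :: "nat \<Rightarrow> (nat \<Rightarrow> nat) \<Rightarrow> (nat \<Rightarrow> nat) \<Rightarrow> (nat \<Rightarrow> nat) \<Rightarrow> bool" where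
  "hyp r lam mu f \<longleftrightarrow> (\<forall>i\<ge>1. lam (Suc i) \<le> lam i) \<and> (\<forall>i>r. lam i = 0) \<and>
     (\<forall>i\<ge>1. mu (Suc i) \<le> mu i) \<and> (\<forall>i>r. mu i = 0) \<and> (\<forall>i. mu i \<le> lam i) \<and> flag r lam f"

lemma antimono1: assumes "\<forall>i\<ge>1. g (Suc i) \<le> (g i :: nat)" "1 \<le> i" "i \<le> j" shows "g j \<le> g i"
  using assms(3)
proof (induction j rule: dec_induct)
  case (step n)
  then show ?case using assms(1,2) by (meson le_trans order_trans)
qed simp

definition aof :: "(nat \<Rightarrow> nat) \<Rightarrow> nat \<Rightarrow> int" where "aof lam = (\<lambda>i. int (lam i) - int i)"

lemma base_case:
  assumes H: "hyp r lam mu f" and f0: "\<forall>k\<in>{1..r}. f k = 0"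
  shows "s_tilde lam mu f z b = det (Mx z b r (aof lam) f (aof mu))"
proof -
  have lm: "\<forall>i\<ge>1. lam (Suc i) \<le> lam i" "\<forall>i>r. lam i = 0" "\<forall>i\<ge>1. mu (Suc i) \<le> mu i"
    "\<forall>i>r. mu i = 0" "\<forall>i. mu i \<le> lam i" using H by (auto simp: hyp_def)
  have lt: "det (Mx z b r (aof lam) f (aof mu)) = (\<Prod>i = 0..<r. if lam (Suc i) = mu (Suc i) then 1 else 0)"
  proof -
    have "det (Mx z b r (aof lam) f (aof mu)) = prod_list (diag_mat (Mx z b r (aof lam) f (aof mu)))"
    proof (rule det_lower_triangular[OF _ Mx_carrier])
      fix i j assume ij: "i < j" "j < r"
      have "mu (Suc j) \<le> mu (Suc i)" using antimono1[OF lm(3), of "Suc i" "Suc j"] ij by simp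
      then have "aof mu (Suc j) < aof lam (Suc i)" using lm(5)[rule_format, of "Suc i"] ij
        by (simp add: aof_def)
      then show "Mx z b r (aof lam) f (aof mu) $$ (i, j) = 0"
        using ij f0 by (simp add: Mx_def G_zero)
    qed
    also have "\<dots> = (\<Prod>i = 0..<r. Mx z b r (aof lam) f (aof mu) $$ (i, i))"
      by (simp add: prod_list_diag_prod Mx_def)
    also have "\<dots> = (\<Prod>i = 0..<r. if lam (Suc i) = mu (Suc i) then 1 else 0)"
      by (rule prod.cong) (use f0 in \<open>auto simp: Mx_def G_zero aof_def\<close>)
    finally show ?thesis .
  qed
  show ?thesis
  proof (cases "\<forall>k\<in>{1..r}. lam k = mu k")
    case True
    have Bempty: "skew_boxes lam mu = {}"
    proof -
      have "lam k = mu k" if "1 \<le> k" for k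
        using True lm(2,4) that by (cases "k \<le> r") auto
      then show ?thesis by (auto simp: skew_boxes_def)
    qed
    have "row_strict_tableaux lam mu f = {\<lambda>_. 0}"
      unfolding row_strict_tableaux_def Bempty by auto
    then have "s_tilde lam mu f z b = 1" by (simp add: s_tilde_def Bempty)
    moreover have "(\<Prod>i = 0..<r. if lam (Suc i) = mu (Suc i) then 1 else (0::'a)) = 1"
      by (rule prod.neutral) (use True in auto)
    ultimately show ?thesis using lt by simp
  next
    case False
    then obtain k where k: "k \<in> {1..r}" "lam k \<noteq> mu k" by blast
    then have kB: "(k, lam k) \<in> skew_boxes lam mu" using lm(5)[rule_format, of k]
      by (auto simp: skew_boxes_def)
    have "row_strict_tableaux lam mu f = {}"
      using tab_bound[OF _ kB] f0 k by fastforce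
    then have "s_tilde lam mu f z b = 0" by (simp add: s_tilde_def)
    moreover have "(\<Prod>i = 0..<r. if lam (Suc i) = mu (Suc i) then 1 else (0::'a)) = 0"
    proof (rule prod_zero)
      show "\<exists>a\<in>{0..<r}. (if lam (Suc a) = mu (Suc a) then 1 else (0::'a)) = 0"
        using k by (intro bexI[of _ "k - 1"]) auto
    qed simp
    ultimately show ?thesis using lt by simp
  qed
qed



lemma main_gen:
  "hyp r lam mu f \<Longrightarrow> s_tilde lam mu f z b = det (Mx z b r (aof lam) f (aof mu))"
proof (induction "\<Sum>k\<in>{1..r}. f k" arbitrary: lam f rule: less_induct)
  case less
  note H = less.prems
  have lm: "\<forall>i\<ge>1. lam (Suc i) \<le> lam i" "\<forall>i>r. lam i = 0" "\<forall>i\<ge>1. mu (Suc i) \<le> mu i"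
    "\<forall>i>r. mu i = 0" "\<forall>i. mu i \<le> lam i" "flag r lam f" using H by (auto simp: hyp_def)
  show ?case
  proof (cases "\<forall>k\<in>{1..r}. f k = 0")
    case True then show ?thesis using base_case[OF H] by blast
  next
    case False
    define M where "M = Max (f ` {1..r})"
    have fin1: "finite (f ` {1..r})" by simp
    have ne: "f ` {1..r} \<noteq> {}" using False by auto
    have fleM: "\<And>k. k \<in> {1..r} \<Longrightarrow> f k \<le> M" unfolding M_def using fin1 by auto
    have "M \<in> f ` {1..r}" unfolding M_def using fin1 ne by (rule Max_in)
    moreover have "M > 0" using False fleM by fastforce
    then obtain N where MN: "M = Suc N" using gr0_conv_Suc by blast
    define S where "S = {k\<in>{1..r}. f k = Suc N}"
    have Sne: "S \<noteq> {}" using \<open>M \<in> f ` {1..r}\<close> MN by (auto simp: S_def)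
    define i where "i = Max S"
    have "i \<in> S" unfolding i_def using Sne by (intro Max_in) (auto simp: S_def)
    then have i1: "1 \<le> i" and ir: "i \<le> r" and fi: "f i = Suc N" by (auto simp: S_def)
    have fle: "\<And>k. k \<in> {1..r} \<Longrightarrow> f k \<le> Suc N" using fleM MN by simp
    have fafter: "\<And>k. i < k \<Longrightarrow> k \<le> r \<Longrightarrow> f k \<noteq> Suc N"
    proof
      fix k assume "i < k" "k \<le> r" "f k = Suc N"
      then have "k \<in> S" using i1 by (auto simp: S_def)
      then have "k \<le> i" unfolding i_def by (intro Max_ge) (auto simp: S_def)
      then show False using \<open>i < k\<close> by simp
    qed
    define f' where "f' = f(i := N)"
    have sumlt: "(\<Sum>k\<in>{1..r}. f' k) < (\<Sum>k\<in>{1..r}. f k)"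
    proof -
      have "(\<Sum>k\<in>{1..r}. f k) = f i + (\<Sum>k\<in>{1..r} - {i}. f k)"
        using i1 ir by (intro sum.remove) auto
      moreover have "(\<Sum>k\<in>{1..r}. f' k) = f' i + (\<Sum>k\<in>{1..r} - {i}. f' k)"
        using i1 ir by (intro sum.remove) auto
      moreover have "(\<Sum>k\<in>{1..r} - {i}. f' k) = (\<Sum>k\<in>{1..r} - {i}. f k)"
        by (rule sum.cong) (auto simp: f'_def)
      ultimately show ?thesis by (simp add: f'_def fi)
    qed
    have flag': "flag r lam f'"
      unfolding flag_def
    proof (intro allI impI)
      fix k j assume kj: "1 \<le> k \<and> k < j \<and> j \<le> r"
      have o: "int (lam k) - int k - int (f k) \<ge> int (lam j) - int j - int (f j)"
        using lm(6) kj by (auto simp: flag_def)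
      show "int (lam k) - int k - int (f' k) \<ge> int (lam j) - int j - int (f' j)"
      proof (cases "j = i")
        case True
        have "lam i \<le> lam k" using antimono1[OF lm(1), of k i] kj True by simp
        moreover have "f k \<le> Suc N" using fle kj True by simp
        ultimately show ?thesis using kj True by (simp add: f'_def)
      next
        case False
        then show ?thesis using o kj fi by (cases "k = i") (auto simp: f'_def)
      qed
    qed
    have H': "hyp r lam mu f'" using H flag' by (simp add: hyp_def)
    have IH1: "s_tilde lam mu f' z b = det (Mx z b r (aof lam) f' (aof mu))"
      using less.hyps[OF sumlt H'] .
    define w where "w = z (Suc N) + b (int (Suc N) - aof lam i)"
    have dsplit: "det (Mx z b r (aof lam) f (aof mu)) = det (Mx z b r (aof lam) f' (aof mu)) +
        w * det (Mx z b r ((aof lam)(i := aof lam i - 1)) f' (aof mu))"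
      unfolding w_def f'_def by (rule det_split[of i r f N, OF i1 ir fi])
    have wB: "z (Suc N) + b (int (Suc N) + int i - int (lam i)) = w"
    proof -
      have "int (Suc N) + int i - int (lam i) = int (Suc N) - aof lam i" by (simp add: aof_def)
      then show ?thesis unfolding w_def by (metis (no_types))
    qed
    have lsi: "lam (Suc i) \<le> lam i" using lm(1) i1 by simp
    have mli: "mu i \<le> lam i" using lm(5) by simp
    consider (valid) "mu i < lam i \<and> lam (Suc i) < lam i" | (empty) "lam i = mu i"
      | (eqrow) "mu i < lam i \<and> lam (Suc i) = lam i"
      using lsi mli by linarith
    then show ?thesis
    proof cases
      case valid
      define lam' where "lam' = lam(i := lam i - 1)"
      have H2: "hyp r lam' mu f'"
        unfolding hyp_def
      proof (intro conjI)
        show "\<forall>k\<ge>1. lam' (Suc k) \<le> lam' k"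
        proof (intro allI impI)
          fix k :: nat assume k: "1 \<le> k"
          show "lam' (Suc k) \<le> lam' k"
          proof (cases "Suc k = i")
            case True then show ?thesis using lm(1) k valid by (auto simp: lam'_def)
          next
            case False then show ?thesis using lm(1) k valid by (auto simp: lam'_def)
          qed
        qed
        show "\<forall>k>r. lam' k = 0" using lm(2) ir by (auto simp: lam'_def)
        show "\<forall>k\<ge>1. mu (Suc k) \<le> mu k" using lm(3) .
        show "\<forall>k>r. mu k = 0" using lm(4) .
        show "\<forall>k. mu k \<le> lam' k" using lm(5) valid by (auto simp: lam'_def)
        show "flag r lam' f'"
          unfolding flag_def
        proof (intro allI impI)
          fix k j assume kj: "1 \<le> k \<and> k < j \<and> j \<le> r"
          have o: "int (lam k) - int k - int (f k) \<ge> int (lam j) - int j - int (f j)"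
            using lm(6) kj by (auto simp: flag_def)
          have li1: "int (lam i - 1) = int (lam i) - 1" using valid by auto
          show "int (lam' k) - int k - int (f' k) \<ge> int (lam' j) - int j - int (f' j)"
            using o li1 fi by (auto simp: lam'_def f'_def)
        qed
      qed
      have IH2: "s_tilde lam' mu f' z b = det (Mx z b r (aof lam') f' (aof mu))"
        using less.hyps[OF sumlt H2] .
      have aof': "aof lam' = (aof lam)(i := aof lam i - 1)"
        using valid by (auto simp: aof_def lam'_def)
      have fprev: "\<And>k. Suc k = i \<Longrightarrow> 1 \<le> k \<Longrightarrow> f k \<le> Suc N" using fle ir by auto
      have finB: "finite (skew_boxes lam mu)" using boxes_fin[OF lm(2)] .
      note sv = split_valid[of i f N mu lam, OF i1 fi _ _ fprev finB, folded lam'_def f'_def]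
      have fin1: "finite (row_strict_tableaux lam mu f')" using tab_fin[OF lm(2)] .
      have lam'0: "\<forall>k>r. lam' k = 0" using H2 by (simp add: hyp_def)
      have fin2: "finite (row_strict_tableaux lam' mu f')" using tab_fin[OF lam'0] .
      let ?g = "\<lambda>T. T((i, lam i) := Suc N)"
      have "s_tilde lam mu f z b = (\<Sum>T\<in>row_strict_tableaux lam mu f' \<union> ?g ` row_strict_tableaux lam' mu f'. wt lam mu z b T)"
        unfolding s_tilde_wt using sv(1) valid by simp
      also have "\<dots> = (\<Sum>T\<in>row_strict_tableaux lam mu f'. wt lam mu z b T) + (\<Sum>T\<in>?g ` row_strict_tableaux lam' mu f'. wt lam mu z b T)"
        by (rule sum.union_disjoint) (use fin1 fin2 sv(2) valid in auto)
      also have "(\<Sum>T\<in>?g ` row_strict_tableaux lam' mu f'. wt lam mu z b T) = (\<Sum>T\<in>row_strict_tableaux lam' mu f'. wt lam mu z b (?g T))"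
        by (rule sum.reindex[unfolded comp_def]) (use sv(3) valid in auto)
      also have "\<dots> = (\<Sum>T\<in>row_strict_tableaux lam' mu f'. w * wt lam' mu z b T)"
        by (rule sum.cong) (use sv(4) valid wB in auto)
      finally have "s_tilde lam mu f z b = s_tilde lam mu f' z b + w * s_tilde lam' mu f' z b"
        by (simp add: s_tilde_wt sum_distrib_left)
      then show ?thesis using IH1 IH2 dsplit aof' by simp
    next
      case empty
      have teq: "row_strict_tableaux lam mu f = row_strict_tableaux lam mu f'"
        unfolding f'_def by (rule tab_eq[of f i N, OF fi]) (use empty in \<open>auto simp: skew_boxes_def\<close>)
      have d0: "det (Mx z b r ((aof lam)(i := aof lam i - 1)) f' (aof mu)) = 0"
      proof (rule det_zero_block[OF Mx_carrier, of "i - 1"])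
        show "i - 1 < r" using i1 ir by simp
        fix k j assume kj: "i - 1 \<le> k" "k < r" "j \<le> i - 1"
        have mj: "mu i \<le> mu (Suc j)" using antimono1[OF lm(3), of "Suc j" i] kj i1 by simp
        have "((aof lam)(i := aof lam i - 1)) (Suc k) < aof mu (Suc j)"
        proof (cases "Suc k = i")
          case True then show ?thesis using empty mj kj i1 by (simp add: aof_def)
        next
          case False
          then have "i < Suc k" using kj i1 by simp
          then have "lam (Suc k) \<le> lam i" using antimono1[OF lm(1), of i "Suc k"] i1 by simp
          moreover have "j < k" using kj \<open>i < Suc k\<close> i1 by simp
          ultimately have "int (lam (Suc k)) \<le> int (mu (Suc j))" "int j < int k" using empty mj by simp_all
          then show ?thesis using False by (simp add: aof_def)
        qed
        then show "Mx z b r ((aof lam)(i := aof lam i - 1)) f' (aof mu) $$ (k, j) = 0"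
          using kj i1 ir by (simp add: Mx_def G_neg)
      qed
      show ?thesis using IH1 dsplit d0 teq by (simp add: s_tilde_def)
    next
      case eqrow
      have ilr: "i < r"
      proof (rule ccontr)
        assume "\<not> i < r"
        then have "lam (Suc i) = 0" using lm(2) ir by simp
        then show False using eqrow by simp
      qed
      have fS: "f (Suc i) = N"
      proof -
        have "f (Suc i) \<noteq> Suc N" using fafter[of "Suc i"] ilr by simp
        moreover have "f (Suc i) \<le> Suc N" using fle[of "Suc i"] ilr by simp
        moreover have "int (lam i) - int i - int (f i) \<ge> int (lam (Suc i)) - int (Suc i) - int (f (Suc i))"
          using lm(6) i1 ilr unfolding flag_def by (metis Suc_le_eq lessI)
        ultimately show ?thesis using eqrow fi by simp
      qed
      have teq: "row_strict_tableaux lam mu f = row_strict_tableaux lam mu f'"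
        unfolding f'_def
      proof (rule tab_eq[of f i N, OF fi], intro ballI impI)
        fix T assume T: "T \<in> row_strict_tableaux lam mu f" and p: "(i, lam i) \<in> skew_boxes lam mu"
        have "mu (Suc i) \<le> mu i" using lm(3) i1 by simp
        then have q: "(Suc i, lam i) \<in> skew_boxes lam mu" using eqrow by (auto simp: skew_boxes_def)
        have "T (i, lam i) \<le> T (Suc i, lam i)" using tab_col[OF T p] q by simp
        also have "\<dots> \<le> N" using tab_bound[OF T q] fS by simp
        finally show "T (i, lam i) \<noteq> Suc N" by simp
      qed
      have d0: "det (Mx z b r ((aof lam)(i := aof lam i - 1)) f' (aof mu)) = 0"
      proof (rule det_identical_rows[OF Mx_carrier, of "i - 1" i])
        show "i - 1 \<noteq> i" "i - 1 < r" "i < r" using i1 ilr by auto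
        have si: "Suc (i - 1) = i" using i1 by simp
        show "row (Mx z b r ((aof lam)(i := aof lam i - 1)) f' (aof mu)) (i - 1) =
              row (Mx z b r ((aof lam)(i := aof lam i - 1)) f' (aof mu)) i"
          using i1 ilr eqrow fS by (simp add: Mx_def si f'_def aof_def algebra_simps)
      qed
      show ?thesis using IH1 dsplit d0 teq by (simp add: s_tilde_def)
    qed
  qed
qed


theorem mainTheorem11:
  fixes lam mu f :: "nat \<Rightarrow> nat" and r :: nat
    and z :: "nat \<Rightarrow> 'a::comm_ring_1" and b :: "int \<Rightarrow> 'a"
  assumes "is_partition_len lam r"
    and "is_partition_atmost mu r"
    and "\<forall>i. mu i \<le> lam i"
    and "\<forall>i j. 1 \<le> i \<and> i < j \<and> j \<le> r \<longrightarrow>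
           int (lam i) - int i - int (f i) \<ge> int (lam j) - int j - int (f j)"
  shows "s_tilde lam mu f z b =
    det (mat r r (\<lambda>(i, j).
      e_kl (int (f (Suc i)))
           (int (lam (Suc i)) - int (mu (Suc j)) + int (Suc j) - int (Suc i) - int (f (Suc i)) - 1)
           (int (lam (Suc i)) - int (mu (Suc j)) + int (Suc j) - int (Suc i))
           z (tau (int (Suc j) - int (mu (Suc j)) - 1) b)))"
proof -
  have H: "hyp r lam mu f" using assms
    by (auto simp: hyp_def is_partition_len_def is_partition_atmost_def flag_def)
  have "mat r r (\<lambda>(i, j).
      e_kl (int (f (Suc i)))
           (int (lam (Suc i)) - int (mu (Suc j)) + int (Suc j) - int (Suc i) - int (f (Suc i)) - 1)
           (int (lam (Suc i)) - int (mu (Suc j)) + int (Suc j) - int (Suc i))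
           z (tau (int (Suc j) - int (mu (Suc j)) - 1) b)) = Mx z b r (aof lam) f (aof mu)"
    unfolding Mx_def G_def aof_def
    by (intro arg_cong[where f="mat r r"] ext) (simp split: prod.split add: algebra_simps)
  then show ?thesis using main_gen[OF H] by simp
qed

end
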